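(* Let $R$ be a $d\times d$ expansive integer matrix, $B\subset\mathbb{Z}^d$ finite with $0\in B$, $N:=|B|$, $L\subset\mathbb{Z}^d$ finite with $0\in L$, and $(\alpha_l)_{l\in L}$ complex numbers such that the matrix $\frac{1}{\sqrt N}\left(e^{2\pi i (R^T)^{-1}l\cdot b}\alpha_l\right)_{l\in L,b\in B}$ has orthonormal columns (equivalently, $\sum_{l\in L}|\alpha_l|^2|m_B((R^T)^{-1}(t-l))|^2=1$ for all $t\in\mathbb{R}^d$). Then for every $k\in\mathbb{N}$ the functions $$\left\{\alpha_{l_0}\cdots\alpha_{l_{k-1}}\,e_{l_0+R^Tl_1+\dots+(R^T)^{k-1}l_{k-1}} : l_0,\dots,l_{k-1}\in L\right\}$$ form a Parseval frame for $L^2(\nu_k)$, where $\nu_k=\frac{1}{N^k}\sum_{b_0,\dots,b_{k-1}\in B}\delta_{R^{-k}(b_0+Rb_1+\dots+R^{k-1}b_{k-1})}$.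
   Context: $e_\lambda(x)=e^{2\pi i\lambda\cdot x}$, $m_B(x)=\frac1N\sum_{b\in B}e^{2\pi ib\cdot x}$, $\delta_a$ is the Dirac measure at $a$. A Parseval frame $\{f_i\}$ of $H$ satisfies $\sum_i|\langle v,f_i\rangle|^2=\|v\|^2$ for all $v\in H$. A matrix is expansive if all eigenvalues have modulus $>1$. *)

theory Defs
  imports "HOL-Analysis.Analysis" "HOL-Library.FuncSet"
begin

primrec mpow :: "real^'n^'n \<Rightarrow> nat \<Rightarrow> real^'n^'n" where
  "mpow A 0 = mat 1"
| "mpow A (Suc k) = A ** mpow A k"

definition int_matrix :: "real^'n^'n \<Rightarrow> bool" where
  "int_matrix A \<longleftrightarrow> (\<forall>i j. A $ i $ j \<in> \<int>)"

definition int_vec :: "real^'n \<Rightarrow> bool" where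
  "int_vec v \<longleftrightarrow> (\<forall>i. v $ i \<in> \<int>)"

definition cmatrix :: "real^'n^'n \<Rightarrow> complex^'n^'n" where
  "cmatrix A = (\<chi> i j. complex_of_real (A $ i $ j))"

definition expansive :: "real^'n^'n \<Rightarrow> bool" where
  "expansive A \<longleftrightarrow>
     (\<forall>c::complex. (\<exists>v::complex^'n. v \<noteq> 0 \<and> cmatrix A *v v = c *s v) \<longrightarrow> 1 < cmod c)"

definition expo :: "real^'n \<Rightarrow> real^'n \<Rightarrow> complex" where
  "expo lam x = exp (2 * pi * \<i> * complex_of_real (lam \<bullet> x))"

definition hadamard_entry ::
  "real^'n^'n \<Rightarrow> (real^'n) set \<Rightarrow> (real^'n \<Rightarrow> complex) \<Rightarrow> real^'n \<Rightarrow> real^'n \<Rightarrow> complex" where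
  "hadamard_entry R B \<alpha> l b =
     expo (matrix_inv (transpose R) *v l) b * \<alpha> l / complex_of_real (sqrt (real (card B)))"

definition orthonormal_columns ::
  "real^'n^'n \<Rightarrow> (real^'n) set \<Rightarrow> (real^'n) set \<Rightarrow> (real^'n \<Rightarrow> complex) \<Rightarrow> bool" where
  "orthonormal_columns R B L \<alpha> \<longleftrightarrow>
     (\<forall>b\<in>B. \<forall>b'\<in>B.
        (\<Sum>l\<in>L. cnj (hadamard_entry R B \<alpha> l b) * hadamard_entry R B \<alpha> l b')
          = (if b = b' then 1 else 0))"

definition nu_point :: "real^'n^'n \<Rightarrow> nat \<Rightarrow> (nat \<Rightarrow> real^'n) \<Rightarrow> real^'n" where
  "nu_point R k b = matrix_inv (mpow R k) *v (\<Sum>j<k. mpow R j *v b j)"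

text \<open>Functions in L^2(nu_k) are represented by arbitrary functions R^d -> C (only their
  values on the finite support matter).\<close>
definition nu_inner ::
  "real^'n^'n \<Rightarrow> (real^'n) set \<Rightarrow> nat \<Rightarrow> (real^'n \<Rightarrow> complex) \<Rightarrow> (real^'n \<Rightarrow> complex) \<Rightarrow> complex" where
  "nu_inner R B k f g =
     (\<Sum>b\<in>Pi\<^sub>E {..<k} (\<lambda>_. B). f (nu_point R k b) * cnj (g (nu_point R k b)))
       / of_nat (card B ^ k)"

definition parseval_frame ::
  "(('a \<Rightarrow> complex) \<Rightarrow> ('a \<Rightarrow> complex) \<Rightarrow> complex) \<Rightarrow> 'i set \<Rightarrow> ('i \<Rightarrow> 'a \<Rightarrow> complex) \<Rightarrow> bool" where
  "parseval_frame ip I F \<longleftrightarrow>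
     (\<forall>v. (\<Sum>i\<in>I. (cmod (ip v (F i)))\<^sup>2) = Re (ip v v))"

definition frame_elem ::
  "real^'n^'n \<Rightarrow> (real^'n \<Rightarrow> complex) \<Rightarrow> nat \<Rightarrow> (nat \<Rightarrow> real^'n) \<Rightarrow> real^'n \<Rightarrow> complex" where
  "frame_elem R \<alpha> k l =
     (\<lambda>x. (\<Prod>j<k. \<alpha> (l j)) * expo (\<Sum>j<k. mpow (transpose R) j *v l j) x)"

end

theory Submission
  imports Defs
begin


lemma mpow_add: "mpow A (a + b) = mpow A a ** mpow A b"
  by (induction a) (auto simp: matrix_mul_assoc)

lemma mpow_Suc': "mpow A (Suc n) = mpow A n ** A"
  using mpow_add[of A n 1] by simp

lemma mpow_transpose: "mpow (transpose A) j = transpose (mpow A j)"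
proof (induction j)
  case (Suc j)
  have "mpow (transpose A) (Suc j) = transpose A ** transpose (mpow A j)" using Suc by simp
  also have "\<dots> = transpose (mpow A j ** A)" by (simp add: matrix_transpose_mul)
  finally show ?case by (simp only: mpow_Suc')
qed simp

lemma invertible_mat1: "invertible (mat 1 :: real^'n^'n)"
  unfolding invertible_def by (rule exI[of _ "mat 1"]) simp

lemma invertible_mpow: "invertible (A::real^'n^'n) \<Longrightarrow> invertible (mpow A k)"
  by (induction k) (auto simp: invertible_mat1 invertible_mult)

lemma matrix_inv_props:
  assumes "invertible (A::real^'n^'n)"
  shows "A ** matrix_inv A = mat 1" "matrix_inv A ** A = mat 1"
proof -
  have "\<exists>A'. A ** A' = mat 1 \<and> A' ** A = mat 1" using assms invertible_def by blast
  from someI_ex[OF this] show "A ** matrix_inv A = mat 1" "matrix_inv A ** A = mat 1"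
    unfolding matrix_inv_def by auto
qed

lemma expansive_invertible:
  assumes "expansive (R::real^'n^'n)"
  shows "invertible R"
proof (rule ccontr)
  assume "\<not> invertible R"
  then obtain x where x: "R *v x = 0" "x \<noteq> 0"
    unfolding invertible_left_inverse matrix_left_invertible_ker by blast
  define cv where "cv = (\<chi> i. complex_of_real (x $ i))"
  have "cv \<noteq> 0" using x(2) by (auto simp: cv_def vec_eq_iff)
  moreover have "cmatrix R *v cv = 0 *s cv"
  proof -
    have "(cmatrix R *v cv) $ i = complex_of_real ((R *v x) $ i)" for i
      by (simp add: cmatrix_def cv_def matrix_vector_mult_def)
    then show ?thesis using x(1) by (simp add: vec_eq_iff)
  qed
  ultimately show False using assms unfolding expansive_def by force
qed

lemma int_vec_mult: "int_matrix A \<Longrightarrow> int_vec v \<Longrightarrow> int_vec (A *v v)"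
  unfolding int_matrix_def int_vec_def matrix_vector_mult_def
  by (auto intro!: Ints_sum Ints_mult)

lemma int_matrix_mpow: "int_matrix A \<Longrightarrow> int_matrix (mpow A k)"
proof (induction k)
  case 0 thus ?case by (auto simp: int_matrix_def mat_def)
next
  case (Suc k) thus ?case
    by (auto simp: int_matrix_def matrix_matrix_mult_def intro!: Ints_sum Ints_mult)
qed

lemma int_vec_diff: "int_vec a \<Longrightarrow> int_vec b \<Longrightarrow> int_vec (a - b)"
  unfolding int_vec_def by auto

lemma int_vec_sum: "(\<And>i. i \<in> S \<Longrightarrow> int_vec (f i)) \<Longrightarrow> int_vec (sum f S)"
  unfolding int_vec_def by (auto simp: sum_component intro!: Ints_sum)

lemma int_inner: "int_vec a \<Longrightarrow> int_vec b \<Longrightarrow> a \<bullet> b \<in> \<int>"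
  unfolding int_vec_def inner_vec_def by (auto intro!: Ints_sum Ints_mult)

lemma expo_int: "l \<bullet> w \<in> \<int> \<Longrightarrow> expo l w = 1"
proof -
  assume "l \<bullet> w \<in> \<int>"
  then obtain m where m: "l \<bullet> w = of_int m" by (auto elim: Ints_cases)
  have "exp (0 + \<i> * (of_int m * (of_real pi * 2))) = 1" by (simp only: exp_plus_2pin) simp
  then show ?thesis unfolding expo_def m by (simp add: mult_ac)
qed

lemma expo_add: "expo l (x + y) = expo l x * expo l y"
  unfolding expo_def by (simp add: inner_add_right distrib_left exp_add[symmetric])

lemma expo_zero: "expo l 0 = 1"
  unfolding expo_def by simp

lemma expo_cnj: "cnj (expo l x) * expo l x' = expo l (x' - x)"
proof -
  have e: "expo l z = exp (\<i> * complex_of_real (2*pi*(l \<bullet> z)))" for z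
    unfolding expo_def by (simp add: mult_ac)
  have c: "cnj (exp (\<i> * complex_of_real t)) = exp (- (\<i> * complex_of_real t))" for t
    by (simp add: exp_cnj)
  show ?thesis unfolding e c
    by (simp add: inner_diff_right exp_add[symmetric] algebra_simps)
qed

lemma expo_sum: "finite S \<Longrightarrow> expo (\<Sum>j\<in>S. f j) x = (\<Prod>j\<in>S. expo (f j) x)"
  unfolding expo_def by (simp add: inner_sum_left sum_distrib_left exp_sum)



lemma had_prod:
  assumes "finite B" "B \<noteq> {}"
  shows "cnj (hadamard_entry R B \<alpha> l b) * hadamard_entry R B \<alpha> l b' =
    cnj (\<alpha> l) * \<alpha> l * (cnj (expo (matrix_inv (transpose R) *v l) b) * expo (matrix_inv (transpose R) *v l) b')
      / of_nat (card B)"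
proof -
  have N: "card B > 0" using assms by (simp add: card_gt_0_iff)
  have s: "complex_of_real (sqrt (real (card B))) * complex_of_real (sqrt (real (card B))) = of_nat (card B)"
    using N by (simp flip: of_real_mult)
  show ?thesis unfolding hadamard_entry_def using s
    by (simp add: field_simps)
qed

lemma ortho0:
  assumes "orthonormal_columns R B L \<alpha>" "finite B" "0 \<in> B"
  shows "(\<Sum>l\<in>L. cnj (\<alpha> l) * \<alpha> l) = of_nat (card B)"
proof -
  have N: "card B > 0" using assms by (auto simp: card_gt_0_iff)
  have H: "(\<Sum>l\<in>L. cnj (hadamard_entry R B \<alpha> l 0) * hadamard_entry R B \<alpha> l 0) = 1"
    using assms(1,3) unfolding orthonormal_columns_def by auto
  hence "(\<Sum>l\<in>L. cnj (\<alpha> l) * \<alpha> l / of_nat (card B)) = 1"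
  proof -
    have "B \<noteq> {}" using assms by auto
    thus ?thesis using H assms had_prod[of B R \<alpha> _ 0 0] by (simp add: expo_zero)
  qed
  hence "(\<Sum>l\<in>L. cnj (\<alpha> l) * \<alpha> l) / of_nat (card B) = 1"
    by (simp add: sum_divide_distrib)
  thus ?thesis using N by (simp add: divide_eq_eq)
qed

lemma inner_transpose_swap: "(l::real^'n) \<bullet> (transpose M *v d) = (M *v l) \<bullet> d"
proof -
  have "l \<bullet> (transpose M *v d) = (d v* M) \<bullet> l" by (simp add: inner_commute)
  also have "\<dots> = d \<bullet> (M *v l)" by (rule dot_lmul_matrix)
  finally show ?thesis by (simp add: inner_commute)
qed

lemma ortho1:
  assumes "orthonormal_columns R B L \<alpha>" "finite B" "b \<in> B" "b' \<in> B" "b \<noteq> b'"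
  shows "(\<Sum>l\<in>L. cnj (\<alpha> l) * \<alpha> l * expo l (transpose (matrix_inv (transpose R)) *v (b' - b))) = 0"
proof -
  have N: "card B > 0" using assms by (auto simp: card_gt_0_iff)
  have H: "(\<Sum>l\<in>L. cnj (hadamard_entry R B \<alpha> l b) * hadamard_entry R B \<alpha> l b') = 0"
    using assms(1,3,4,5) unfolding orthonormal_columns_def by auto
  hence "(\<Sum>l\<in>L. cnj (\<alpha> l) * \<alpha> l * expo l (transpose (matrix_inv (transpose R)) *v (b' - b)) / of_nat (card B)) = 0"
  proof -
    have "expo l (transpose (matrix_inv (transpose R)) *v (b' - b)) =
      cnj (expo (matrix_inv (transpose R) *v l) b) * expo (matrix_inv (transpose R) *v l) b'" for l
    proof -
      have "expo l (transpose (matrix_inv (transpose R)) *v (b' - b)) = expo (matrix_inv (transpose R) *v l) (b' - b)"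
        unfolding expo_def inner_transpose_swap ..
      thus ?thesis by (simp only: expo_cnj)
    qed
    moreover have "B \<noteq> {}" using assms by auto
    ultimately show ?thesis using H had_prod[of B R \<alpha> _ b b'] assms by simp
  qed
  hence "(\<Sum>l\<in>L. cnj (\<alpha> l) * \<alpha> l * expo l (transpose (matrix_inv (transpose R)) *v (b' - b))) / of_nat (card B) = 0"
    by (simp add: sum_divide_distrib)
  thus ?thesis using N by simp
qed



lemma mv_sum: "finite S \<Longrightarrow> (A::real^'n^'m) *v sum f S = (\<Sum>i\<in>S. A *v f i)"
  by (induction S rule: finite_induct) (auto simp: matrix_vector_right_distrib)

lemma K_prod:
  assumes "finite L"
  shows "(\<Sum>l\<in>Pi\<^sub>E {..<k} (\<lambda>_. L). cnj (frame_elem R \<alpha> k l x) * frame_elem R \<alpha> k l x') =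
    (\<Prod>j<k. \<Sum>l\<in>L. cnj (\<alpha> l) * \<alpha> l * expo l (mpow R j *v (x' - x)))"
proof -
  have "cnj (frame_elem R \<alpha> k l x) * frame_elem R \<alpha> k l x' =
     (\<Prod>j<k. cnj (\<alpha> (l j)) * \<alpha> (l j) * expo (l j) (mpow R j *v (x' - x)))" for l
  proof -
    have e: "expo (mpow (transpose R) j *v l j) (x' - x) = expo (l j) (mpow R j *v (x' - x))" for j
    proof -
      have "(mpow (transpose R) j *v l j) \<bullet> (x' - x) = l j \<bullet> (mpow R j *v (x' - x))"
        using inner_transpose_swap[of "x' - x" "mpow R j" "l j"]
        by (simp add: mpow_transpose inner_commute)
      thus ?thesis unfolding expo_def by simp
    qed
    have "cnj (frame_elem R \<alpha> k l x) * frame_elem R \<alpha> k l x' =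
      (\<Prod>j<k. cnj (\<alpha> (l j)) * \<alpha> (l j)) *
      (cnj (expo (\<Sum>j<k. mpow (transpose R) j *v l j) x) * expo (\<Sum>j<k. mpow (transpose R) j *v l j) x')"
      unfolding frame_elem_def by (simp add: prod.distrib[symmetric] mult_ac)
    also have "\<dots> = (\<Prod>j<k. cnj (\<alpha> (l j)) * \<alpha> (l j)) * (\<Prod>j<k. expo (l j) (mpow R j *v (x' - x)))"
      by (subst expo_cnj) (simp only: expo_sum[OF finite_lessThan] e)
    finally show ?thesis by (simp add: prod.distrib)
  qed
  hence "(\<Sum>l\<in>Pi\<^sub>E {..<k} (\<lambda>_. L). cnj (frame_elem R \<alpha> k l x) * frame_elem R \<alpha> k l x') =
     (\<Sum>l\<in>Pi\<^sub>E {..<k} (\<lambda>_. L). \<Prod>j<k. cnj (\<alpha> (l j)) * \<alpha> (l j) * expo (l j) (mpow R j *v (x' - x)))"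
    by simp
  also have "\<dots> = (\<Prod>j<k. \<Sum>l\<in>L. cnj (\<alpha> l) * \<alpha> l * expo l (mpow R j *v (x' - x)))"
    by (rule prod_sum_PiE[symmetric]) (use assms in auto)
  finally show ?thesis .
qed



lemma kernel_zero:
  fixes R :: "real^'n^'n"
  assumes R: "int_matrix R" "invertible R"
    and B: "finite B" "\<forall>b\<in>B. int_vec b"
    and L: "\<forall>l\<in>L. int_vec l"
    and orth: "orthonormal_columns R B L \<alpha>"
    and bb: "b \<in> Pi\<^sub>E {..<k} (\<lambda>_. B)" "b' \<in> Pi\<^sub>E {..<k} (\<lambda>_. B)" "b \<noteq> b'"
  shows "(\<Prod>j<k. \<Sum>l\<in>L. cnj (\<alpha> l) * \<alpha> l *
           expo l (mpow R j *v (nu_point R k b' - nu_point R k b))) = 0"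
proof -
  define y where "y = nu_point R k b' - nu_point R k b"
  define d where "d = (\<lambda>i. b' i - b i)"
  have ex: "\<exists>i. i < k \<and> b i \<noteq> b' i"
  proof (rule ccontr)
    assume nex: "\<not> (\<exists>i. i < k \<and> b i \<noteq> b' i)"
    have "b i = b' i" for i
    proof (cases "i < k")
      case True thus ?thesis using nex by blast
    next
      case False
      hence "i \<notin> {..<k}" by simp
      thus ?thesis using PiE_arb[OF bb(1)] PiE_arb[OF bb(2)] by metis
    qed
    hence "b = b'" by (rule ext)
    thus False using bb(3) by contradiction
  qed
  define i0 where "i0 = (LEAST i. i < k \<and> b i \<noteq> b' i)"
  have i0c: "i0 < k \<and> b i0 \<noteq> b' i0" unfolding i0_def by (rule LeastI_ex[OF ex])
  hence i0: "i0 < k" "b i0 \<noteq> b' i0" by blast+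
  have below: "d i = 0" if "i < i0" for i
  proof -
    have "\<not> (i < k \<and> b i \<noteq> b' i)" using that unfolding i0_def by (rule not_less_Least)
    moreover have "i < k" using that i0(1) by linarith
    ultimately have "b i = b' i" by blast
    thus ?thesis unfolding d_def by simp
  qed
  define j where "j = k - Suc i0"
  have kj: "k = i0 + Suc j" "j < k" using i0(1) unfolding j_def by auto
  define w where "w = (\<Sum>t<j. mpow R t *v d (i0 + Suc t))"
  have invM: "invertible (mpow R k)" using invertible_mpow R(2) by blast
  have My: "mpow R k *v y = (\<Sum>i<k. mpow R i *v d i)"
  proof -
    have "mpow R k *v y = (mpow R k ** matrix_inv (mpow R k)) *v (\<Sum>j<k. mpow R j *v b' j)
        - (mpow R k ** matrix_inv (mpow R k)) *v (\<Sum>j<k. mpow R j *v b j)"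
      unfolding y_def nu_point_def by (simp add: matrix_vector_mult_diff_distrib matrix_vector_mul_assoc)
    also have "\<dots> = (\<Sum>i<k. mpow R i *v d i)"
      unfolding matrix_inv_props(1)[OF invM] d_def
      by (simp add: sum_subtractf matrix_vector_mult_diff_distrib)
    finally show ?thesis .
  qed
  have "(\<Sum>i<k. mpow R i *v d i) = (\<Sum>i\<in>{i0..<k}. mpow R i *v d i)"
    by (rule sum.mono_neutral_right) (auto simp: below)
  also have "\<dots> = (\<Sum>t<Suc j. mpow R (i0 + t) *v d (i0 + t))"
  proof -
    have "{i0..<k} = (\<lambda>t. i0 + t) ` {..<Suc j}"
    proof
      show "(\<lambda>t. i0 + t) ` {..<Suc j} \<subseteq> {i0..<k}" using kj(1) by auto
      show "{i0..<k} \<subseteq> (\<lambda>t. i0 + t) ` {..<Suc j}"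
      proof
        fix i assume "i \<in> {i0..<k}"
        hence "i = i0 + (i - i0)" "i - i0 < Suc j" using kj(1) by auto
        thus "i \<in> (\<lambda>t. i0 + t) ` {..<Suc j}" by blast
      qed
    qed
    thus ?thesis by (simp add: sum.reindex)
  qed
  also have "\<dots> = mpow R i0 *v d i0 + (\<Sum>t<j. mpow R (i0 + Suc t) *v d (i0 + Suc t))"
    by (simp only: sum.lessThan_Suc_shift) simp
  also have "\<dots> = mpow R i0 *v (d i0 + R *v w)"
  proof -
    have "mpow R (i0 + Suc t) *v v = mpow R i0 *v (R *v (mpow R t *v v))" for t v
      by (simp only: mpow_add mpow.simps(2) matrix_vector_mul_assoc)
    thus ?thesis unfolding w_def
      by (simp add: mv_sum matrix_vector_right_distrib)
  qed
  finally have eq1: "mpow R k *v y = mpow R i0 *v (d i0 + R *v w)" using My by simp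
  have "mpow R k *v y = mpow R i0 *v (R *v (mpow R j *v y))"
    unfolding kj(1) by (simp only: mpow_add mpow.simps(2) matrix_vector_mul_assoc)
  with eq1 have "R *v (mpow R j *v y) = d i0 + R *v w"
    using injD[OF inj_matrix_vector_mult[OF invertible_mpow[OF R(2), of i0]]] by metis
  define Rinv where "Rinv = transpose (matrix_inv (transpose R))"
  have "invertible (transpose R)" using R(2) by (rule transpose_invertible)
  hence "transpose R ** matrix_inv (transpose R) = mat 1" by (rule matrix_inv_props(1))
  have RinvR: "Rinv ** R = mat 1"
  proof -
    have "transpose (transpose R ** matrix_inv (transpose R)) = mat 1"
      using \<open>transpose R ** matrix_inv (transpose R) = mat 1\<close> by simp
    thus ?thesis unfolding Rinv_def by (simp only: matrix_transpose_mul transpose_transpose)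
  qed
  have Ry: "mpow R j *v y = Rinv *v d i0 + w"
  proof -
    have "Rinv *v (R *v (mpow R j *v y)) = Rinv *v (d i0 + R *v w)"
      using \<open>R *v (mpow R j *v y) = d i0 + R *v w\<close> by simp
    moreover have RR: "Rinv *v (R *v u) = u" for u
      by (simp only: matrix_vector_mul_assoc RinvR matrix_vector_mul_lid)
    ultimately show ?thesis by (simp only: RR matrix_vector_right_distrib)
  qed
  have bi0: "b i0 \<in> B" "b' i0 \<in> B" using bb i0(1) by auto
  have wint: "int_vec w" unfolding w_def d_def
    using bb B(2) kj
    by (intro int_vec_sum int_vec_mult int_matrix_mpow R(1) int_vec_diff) auto
  have "(\<Sum>l\<in>L. cnj (\<alpha> l) * \<alpha> l * expo l (mpow R j *v y)) =
        (\<Sum>l\<in>L. cnj (\<alpha> l) * \<alpha> l * expo l (Rinv *v (b' i0 - b i0)))"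
    unfolding Ry
    by (intro sum.cong refl) (simp add: expo_add expo_int int_inner L wint d_def)
  also have "\<dots> = 0" unfolding Rinv_def
    by (rule ortho1[OF orth B(1) bi0 ]) (use i0(2) in auto)
  finally have "(\<Sum>l\<in>L. cnj (\<alpha> l) * \<alpha> l * expo l (mpow R j *v y)) = 0" .
  thus ?thesis unfolding y_def[symmetric]
    by (intro prod_zero) (use kj(2) in auto)
qed



lemma kernel:
  fixes R :: "real^'n^'n"
  assumes R: "int_matrix R" "invertible R"
    and B: "finite B" "0 \<in> B" "\<forall>b\<in>B. int_vec b"
    and L: "finite L" "\<forall>l\<in>L. int_vec l"
    and orth: "orthonormal_columns R B L \<alpha>"
    and bb: "b \<in> Pi\<^sub>E {..<k} (\<lambda>_. B)" "b' \<in> Pi\<^sub>E {..<k} (\<lambda>_. B)"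
  shows "(\<Sum>l\<in>Pi\<^sub>E {..<k} (\<lambda>_. L). cnj (frame_elem R \<alpha> k l (nu_point R k b)) *
            frame_elem R \<alpha> k l (nu_point R k b')) = (if b = b' then of_nat (card B ^ k) else 0)"
proof (cases "b = b'")
  case True
  have "(\<Prod>j<k. \<Sum>l\<in>L. cnj (\<alpha> l) * \<alpha> l * expo l (mpow R j *v (nu_point R k b' - nu_point R k b)))
      = (\<Prod>j<k. (of_nat (card B) :: complex))"
    using True ortho0[OF orth B(1,2)] by (simp add: expo_zero)
  then show ?thesis using True K_prod[OF L(1)] by simp
next
  case False
  then show ?thesis using K_prod[OF L(1)] kernel_zero[OF R B(1,3) L(2) orth bb False] by simp
qed

theorem proposition3p7:
  fixes R :: "real^'n^'n" and B L :: "(real^'n) set" and \<alpha> :: "real^'n \<Rightarrow> complex"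
  assumes "int_matrix R" and "expansive R"
    and "finite B" and "0 \<in> B" and "\<forall>b\<in>B. int_vec b"
    and "finite L" and "0 \<in> L" and "\<forall>l\<in>L. int_vec l"
    and "orthonormal_columns R B L \<alpha>"
  shows "\<forall>k::nat. parseval_frame (nu_inner R B k) (Pi\<^sub>E {..<k} (\<lambda>_. L)) (frame_elem R \<alpha> k)"
proof (intro allI)
  fix k :: nat
  have invR: "invertible R" using assms(2) by (rule expansive_invertible)
  define D where "D = Pi\<^sub>E {..<k} (\<lambda>_. B)"
  define A where "A = Pi\<^sub>E {..<k} (\<lambda>_. L)"
  define c :: complex where "c = of_nat (card B ^ k)"
  define X where "X = nu_point R k"
  define F where "F = frame_elem R \<alpha> k"
  have finD: "finite D" unfolding D_def using assms(3) by (simp add: finite_PiE)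
  have finA: "finite A" unfolding A_def using assms(6) by (simp add: finite_PiE)
  have c0: "c \<noteq> 0" unfolding c_def using assms(3,4) by (auto simp: card_gt_0_iff)
  have K: "(\<Sum>l\<in>A. cnj (F l (X b)) * F l (X b')) = (if b = b' then c else 0)"
    if "b \<in> D" "b' \<in> D" for b b'
    unfolding A_def F_def X_def c_def
    by (rule kernel[OF assms(1) invR assms(3,4,5,6,8,9)]) (use that in \<open>auto simp: D_def\<close>)
  show "parseval_frame (nu_inner R B k) (Pi\<^sub>E {..<k} (\<lambda>_. L)) (frame_elem R \<alpha> k)"
    unfolding parseval_frame_def
  proof
    fix v :: "real^'n \<Rightarrow> complex"
    have ip: "nu_inner R B k v g = (\<Sum>b\<in>D. v (X b) * cnj (g (X b))) / c" for g
      unfolding nu_inner_def D_def X_def c_def ..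
    have "complex_of_real (\<Sum>l\<in>A. (cmod (nu_inner R B k v (F l)))\<^sup>2)
        = (\<Sum>l\<in>A. nu_inner R B k v (F l) * cnj (nu_inner R B k v (F l)))"
      by (simp only: of_real_sum complex_norm_square)
    also have "\<dots> = (\<Sum>l\<in>A. \<Sum>b\<in>D. \<Sum>b'\<in>D. (v (X b) * cnj (v (X b'))) * (cnj (F l (X b)) * F l (X b'))) / (c * c)"
    proof -
      have "nu_inner R B k v (F l) * cnj (nu_inner R B k v (F l)) =
        (\<Sum>b\<in>D. \<Sum>b'\<in>D. (v (X b) * cnj (v (X b'))) * (cnj (F l (X b)) * F l (X b'))) / (c * c)" for l
      proof -
        have cc: "cnj c = c" unfolding c_def by simp
        have "nu_inner R B k v (F l) * cnj (nu_inner R B k v (F l)) =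
          ((\<Sum>b\<in>D. v (X b) * cnj (F l (X b))) * (\<Sum>b'\<in>D. cnj (v (X b') * cnj (F l (X b'))))) / (c * c)"
          unfolding ip complex_cnj_divide cnj_sum cc by simp
        also have "\<dots> = (\<Sum>b\<in>D. \<Sum>b'\<in>D. (v (X b) * cnj (F l (X b))) * cnj (v (X b') * cnj (F l (X b')))) / (c * c)"
          by (simp only: sum_product)
        also have "\<dots> = (\<Sum>b\<in>D. \<Sum>b'\<in>D. (v (X b) * cnj (v (X b'))) * (cnj (F l (X b)) * F l (X b'))) / (c * c)"
          by (intro arg_cong2[where f="(/)"] sum.cong refl) (simp add: mult_ac)
        finally show ?thesis .
      qed
      thus ?thesis by (simp only: sum_divide_distrib)
    qed
    also have "\<dots> = (\<Sum>b\<in>D. \<Sum>b'\<in>D. (v (X b) * cnj (v (X b'))) * (\<Sum>l\<in>A. cnj (F l (X b)) * F l (X b'))) / (c * c)"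
    proof -
      have "(\<Sum>l\<in>A. \<Sum>b\<in>D. \<Sum>b'\<in>D. (v (X b) * cnj (v (X b'))) * (cnj (F l (X b)) * F l (X b')))
        = (\<Sum>b\<in>D. \<Sum>l\<in>A. \<Sum>b'\<in>D. (v (X b) * cnj (v (X b'))) * (cnj (F l (X b)) * F l (X b')))"
        by (rule sum.swap)
      also have "\<dots> = (\<Sum>b\<in>D. \<Sum>b'\<in>D. \<Sum>l\<in>A. (v (X b) * cnj (v (X b'))) * (cnj (F l (X b)) * F l (X b')))"
        by (intro sum.cong refl sum.swap)
      also have "\<dots> = (\<Sum>b\<in>D. \<Sum>b'\<in>D. (v (X b) * cnj (v (X b'))) * (\<Sum>l\<in>A. cnj (F l (X b)) * F l (X b')))"
        by (simp only: sum_distrib_left)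
      finally show ?thesis by (rule arg_cong[where f="\<lambda>x. x/(c*c)"])
    qed
    also have "\<dots> = (\<Sum>b\<in>D. v (X b) * cnj (v (X b)) * c) / (c * c)"
    proof -
      have "(\<Sum>b'\<in>D. (v (X b) * cnj (v (X b'))) * (\<Sum>l\<in>A. cnj (F l (X b)) * F l (X b'))) =
            v (X b) * cnj (v (X b)) * c" if "b \<in> D" for b
      proof -
        have "(\<Sum>b'\<in>D. (v (X b) * cnj (v (X b'))) * (\<Sum>l\<in>A. cnj (F l (X b)) * F l (X b'))) =
              (\<Sum>b'\<in>D. if b = b' then v (X b) * cnj (v (X b)) * c else 0)"
          by (intro sum.cong refl) (simp add: K that)
        also have "\<dots> = v (X b) * cnj (v (X b)) * c" using finD that by simp
        finally show ?thesis .
      qed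
      hence "(\<Sum>b\<in>D. \<Sum>b'\<in>D. (v (X b) * cnj (v (X b'))) * (\<Sum>l\<in>A. cnj (F l (X b)) * F l (X b')))
        = (\<Sum>b\<in>D. v (X b) * cnj (v (X b)) * c)" by (rule sum.cong[OF refl])
      thus ?thesis by (rule arg_cong[where f="\<lambda>x. x/(c*c)"])
    qed
    also have "\<dots> = (\<Sum>b\<in>D. v (X b) * cnj (v (X b))) * c / (c * c)"
      by (simp only: sum_distrib_right)
    also have "\<dots> = (\<Sum>b\<in>D. v (X b) * cnj (v (X b))) / c"
      using c0 by (simp add: field_simps)
    also have "\<dots> = nu_inner R B k v v"
      unfolding ip ..
    finally have "complex_of_real (\<Sum>l\<in>A. (cmod (nu_inner R B k v (F l)))\<^sup>2) = nu_inner R B k v v" .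
    hence "(\<Sum>l\<in>A. (cmod (nu_inner R B k v (F l)))\<^sup>2) = Re (nu_inner R B k v v)"
      by (metis Re_complex_of_real)
    thus "(\<Sum>i\<in>Pi\<^sub>E {..<k} (\<lambda>_. L). (cmod (nu_inner R B k v (frame_elem R \<alpha> k i)))\<^sup>2) =
      Re (nu_inner R B k v v)" unfolding A_def F_def .
  qed
qed

end
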